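(* Fix $B>0$. For an integer $k\ge1$ and $p\in(0,1)$ let \[V_k(p)=\Big(\frac1p+\frac2{1-p}\Big)B^2k+\frac{2B^2(p^{k}-1)}{(1-p)^2},\] the worst-case (over potential outcomes in $[0,B]$) variance of the path-level Horvitz–Thompson estimator on an alternating path of length $k$ under the Alternating Path Randomized Design with parameter $p$. Let $p^*_k$ denote the optimal (minimizing) value of $p$ for $V_k$. Then $\lim_{k\to\infty}p^*_k=\sqrt2-1$.
   Context: Alternating Path Randomized Design on an alternating path with edges $e_1,\dots,e_k$ (consecutive edges alternate between treatment-only and control-only matches): indicators $W_1,\dots,W_k\in\{0,1\}$ with $\mathbb{P}(W_1=1)=p/(1+p)$ and, for $j\ge2$, conditionally on $W_1,\dots,W_{j-1}$, $W_j=1$ with probability $p$ if $W_{j-1}=0$ and $W_j=0$ if $W_{j-1}=1$. The path-level estimator is $\hat\Gamma=\sum_j (-1)^{j+1}W_jY_{e_j}/\mathbb{P}(W_j=1)$ (up to a global sign), and $V_k(p)=\max_{Y_{e_j}\in[0,B]}\mathrm{Var}(\hat\Gamma)$, which equals the displayed formula. The minimization is over the design parameter $p\in(0,1)$. *)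

theory Defs
  imports Complex_Main
begin

definition Vk :: "real \<Rightarrow> nat \<Rightarrow> real \<Rightarrow> real" where
  "Vk B k p = (1 / p + 2 / (1 - p)) * B^2 * real k + 2 * B^2 * (p ^ k - 1) / (1 - p)^2"

definition is_opt_p :: "real \<Rightarrow> nat \<Rightarrow> real \<Rightarrow> bool" where
  "is_opt_p B k p \<longleftrightarrow> p \<in> {0<..<1} \<and> (\<forall>q \<in> {0<..<1}. Vk B k p \<le> Vk B k q)"

end

theory Submission
  imports Defs
begin

definition QQ :: "nat \<Rightarrow> real \<Rightarrow> real" where
  "QQ k p = (\<Sum>i<k. \<Sum>j<i. p^j)"

definition FF :: "nat \<Rightarrow> real \<Rightarrow> real" where
  "FF k p = real k / p + 2 * QQ k p"

definition gg :: "real \<Rightarrow> real" where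
  "gg p = 1 / p + 2 / (1 - p)"

lemma key_id: "real k * (1-p) + p^k - 1 = (1-p)^2 * QQ k (p::real)"
proof (induction k)
  case 0
  then show ?case by (simp add: QQ_def)
next
  case (Suc k)
  define S where "S = (\<Sum>j<k. p^j)"
  have "QQ (Suc k) p = QQ k p + S" by (simp add: QQ_def S_def)
  then have "(1-p)^2 * QQ (Suc k) p = (1-p)^2 * QQ k p + (1-p)*((1-p) * S)"
    by (simp add: power2_eq_square algebra_simps)
  moreover have "(1-p) * S = 1 - p^k" unfolding S_def by (simp add: one_diff_power_eq)
  ultimately have "(1-p)^2 * QQ (Suc k) p = (1-p)^2 * QQ k p + (1-p)*(1-p^k)"
    by simp
  moreover have "real (Suc k) * (1-p) + p^(Suc k) - 1 = (real k * (1-p) + p^k - 1) + (1-p)*(1-p^k)"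
    by (simp add: algebra_simps)
  ultimately show ?case using Suc.IH by simp
qed

lemma FF_g: assumes "0 < p" "p < 1"
  shows "FF k p = real k * gg p + 2 * (p^k - 1) / (1-p)^2"
proof -
  have "QQ k p = (real k * (1-p) + p^k - 1) / (1-p)^2" using key_id[of k p] assms by simp
  also have "\<dots> = real k * (1-p) / (1-p)^2 + (p^k - 1) / (1-p)^2"
    by (simp add: add_divide_distrib[symmetric])
  also have "real k * (1-p) / (1-p)^2 = real k / (1-p)" using assms by (simp add: power2_eq_square)
  finally have "QQ k p = real k / (1-p) + (p^k - 1) / (1-p)^2" .
  then show ?thesis unfolding FF_def gg_def by (simp add: algebra_simps)
qed

lemma Vk_eq: assumes "0 < p" "p < 1" shows "Vk B k p = B^2 * FF k p"
proof -
  have "Vk B k p = B^2 * (real k * gg p + 2 * (p^k - 1) / (1-p)^2)"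
    unfolding Vk_def gg_def by (simp add: algebra_simps)
  then show ?thesis using FF_g[OF assms] by simp
qed

lemma QQ_mono: assumes "0 \<le> p" "p \<le> q" shows "QQ k p \<le> QQ k q"
  unfolding QQ_def using assms by (intro sum_mono power_mono) auto

lemma QQ_nonneg: assumes "0 \<le> p" shows "0 \<le> QQ k p"
  unfolding QQ_def using assms by (intro sum_nonneg) auto

lemma QQ34: "QQ k (3/4) \<ge> 4 * real k - 16"
proof -
  have e: "(\<Sum>j<i. (3/4::real)^j) = 4 * (1 - (3/4)^i)" for i
    using one_diff_power_eq[of "3/4::real" i] by simp
  have "QQ k (3/4) = 4 * (\<Sum>i<k. (1 - (3/4::real)^i))"
    unfolding QQ_def e by (simp add: sum_distrib_left)
  also have "\<dots> = 4 * (real k - (\<Sum>i<k. (3/4::real)^i))"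
    by (simp add: sum_subtractf)
  also have "(\<Sum>i<k. (3/4::real)^i) = 4 * (1 - (3/4)^k)"
    using e by simp
  finally show ?thesis by simp
qed

lemma FF_high: assumes "3/4 \<le> p" "p \<le> 1" shows "FF k p \<ge> 9 * real k - 32"
proof -
  have "real k * p \<le> real k" using assms by (intro mult_left_le) auto
  then have "real k / p \<ge> real k" using assms by (simp add: le_divide_eq)
  moreover have "QQ k p \<ge> QQ k (3/4)" using assms by (intro QQ_mono) auto
  ultimately show ?thesis using QQ34[of k] unfolding FF_def by linarith
qed

definition ss :: real where "ss = sqrt 2 - 1"

lemma sqrt2_bounds: "1.41 < sqrt (2::real)" "sqrt (2::real) < 1.42"
  by (rule real_less_rsqrt, simp add: power2_eq_square) (rule real_less_lsqrt, simp_all add: power2_eq_square)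

lemma ss_bounds: "0.41 < ss" "ss < 0.42"
  using sqrt2_bounds unfolding ss_def by auto

lemma gg_ss: "gg ss < 6"
proof -
  have "1 / ss < 1/0.41" using ss_bounds by (intro divide_strict_left_mono) auto
  moreover have "2 / (1 - ss) < 2 / 0.58" using ss_bounds by (intro divide_strict_left_mono) auto
  ultimately show ?thesis unfolding gg_def by simp
qed

lemma FF_ss: "FF k ss \<le> 6 * real k"
proof -
  have "ss^k \<le> 1" using ss_bounds by (intro power_le_one) auto
  then have "2 * (ss^k - 1) / (1-ss)^2 \<le> 0" by (intro divide_nonpos_nonneg) auto
  moreover have "real k * gg ss \<le> real k * 6" by (rule mult_left_mono) (use gg_ss in auto)
  ultimately show ?thesis using FF_g[of ss k] ss_bounds by (simp add: algebra_simps)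
qed

lemma ss_rel: "2 * ss^2 = (1 - ss)^2"
  unfolding ss_def by (simp add: power2_eq_square algebra_simps)

lemma gg_quad: assumes "0 < p" "p < 1" shows "gg p - gg ss \<ge> (p - ss)^2"
proof -
  have s: "0 < ss" "ss < 1" using ss_bounds by auto
  have id: "gg p - gg ss = (p-ss)^2 * (2/((1-p)*(1-ss)^2) + 1/(p*ss^2))"
  proof -
    have a: "1/p - 1/ss = (p - ss) * (- 1/(p*ss))" using assms s by (simp add: field_simps)
    have b: "2/(1-p) - 2/(1-ss) = (p - ss) * (2/((1-p)*(1-ss)))" using assms s by (simp add: field_simps)
    have "gg p - gg ss = (p - ss) * (2/((1-p)*(1-ss)) - 1/(p*ss))"
      unfolding gg_def using a b by (simp add: algebra_simps)
    also have "2/((1-p)*(1-ss)) - 1/(p*ss) = (2/((1-p)*(1-ss)) - 2/(1-ss)^2) + (1/ss^2 - 1/(p*ss))"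
    proof -
      have c: "2/(1-ss)^2 = 1/ss^2" using ss_rel s by (simp add: field_simps)
      show ?thesis by (simp add: c)
    qed
    also have "\<dots> = (p-ss) * (2/((1-p)*(1-ss)^2) + 1/(p*ss^2))"
    proof -
      have gen: "2/(x*y) - 2/y^2 = (y-x) * (2/(x*y^2))" if "x \<noteq> 0" "y \<noteq> 0" for x y :: real
        using that by (simp add: field_simps power2_eq_square)
      have d1: "2/((1-p)*(1-ss)) - 2/(1-ss)^2 = (p-ss) * (2/((1-p)*(1-ss)^2))"
        using gen[of "1-p" "1-ss"] assms s by simp
      have d2: "1/ss^2 - 1/(p*ss) = (p-ss) * (1/(p*ss^2))"
        using assms s by (simp add: field_simps power2_eq_square)
      show ?thesis unfolding d1 d2 by (simp add: algebra_simps)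
    qed
    finally show ?thesis by (simp add: power2_eq_square)
  qed
  have "1 \<le> 1/(p*ss^2)"
  proof -
    have "p*ss^2 \<le> 1" using assms s by (simp add: mult_le_one power_le_one)
    then show ?thesis using assms s by (simp add: field_simps)
  qed
  moreover have "0 \<le> 2/((1-p)*(1-ss)^2)" using assms by simp
  ultimately have "1 \<le> 2/((1-p)*(1-ss)^2) + 1/(p*ss^2)" by linarith
  then show ?thesis unfolding id by (simp add: mult_le_cancel_left1)
qed

lemma FF_pos_small: assumes "0 < q" "q < 1/6" "k > 0" shows "FF k q > 6 * real k"
proof -
  have "real k / q > real k / (1/6)" using assms by (intro divide_strict_left_mono) auto
  then show ?thesis unfolding FF_def using QQ_nonneg[of q k] assms by simp
qed

lemma cont_FF: "continuous_on {1/6..1} (FF k)"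
  unfolding FF_def QQ_def by (intro continuous_intros) auto

lemma exists_opt: assumes "B > 0" "k \<ge> 12" shows "\<exists>p. is_opt_p B k p"
proof -
  obtain x where x: "x \<in> {1/6..1}" and xm: "\<forall>y\<in>{1/6..1}. FF k x \<le> FF k y"
    using continuous_attains_inf[OF compact_Icc _ cont_FF[of k]] by auto
  have "ss \<in> {1/6..1}" using ss_bounds by auto
  then have "FF k x \<le> 6 * real k" using xm FF_ss[of k] by force
  moreover have "x \<ge> 3/4 \<Longrightarrow> FF k x \<ge> 9 * real k - 32" using x FF_high by auto
  ultimately have x34: "x < 3/4" using assms by linarith
  show ?thesis unfolding is_opt_p_def
  proof (intro exI conjI ballI)
    show "x \<in> {0<..<1}" using x x34 by auto
    fix q :: real assume q: "q \<in> {0<..<1}"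
    have "FF k x \<le> FF k q"
    proof (cases "q \<ge> 1/6")
      case True then show ?thesis using xm q by auto
    next
      case False
      then have "FF k q > 6 * real k" using FF_pos_small[of q k] q assms by auto
      then show ?thesis using \<open>FF k x \<le> 6 * real k\<close> by linarith
    qed
    then show "Vk B k x \<le> Vk B k q"
      using Vk_eq[of x B k] Vk_eq[of q B k] q x x34 by (auto intro: mult_left_mono)
  qed
qed

lemma opt_close: assumes "B > 0" "k \<ge> 12" "is_opt_p B k p"
  shows "\<bar>p - ss\<bar> \<le> sqrt (32 / real k)"
proof -
  have p: "0 < p" "p < 1" using assms(3) unfolding is_opt_p_def by auto
  have s: "0 < ss" "ss < 1" using ss_bounds by auto
  have "Vk B k p \<le> Vk B k ss" using assms(3) s unfolding is_opt_p_def by auto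
  then have "B^2 * FF k p \<le> B^2 * FF k ss" using Vk_eq[OF p] Vk_eq[OF s] by simp
  then have le: "FF k p \<le> FF k ss" using assms(1) by simp
  have "ss^k \<le> 1" using s by (intro power_le_one) auto
  then have "2 * (ss^k - 1) / (1-ss)^2 \<le> 0" by (intro divide_nonpos_nonneg) auto
  then have fs: "FF k ss \<le> real k * gg ss" using FF_g[OF s, of k] by simp
  have "FF k ss \<le> 6 * real k" by (rule FF_ss)
  moreover have "p \<ge> 3/4 \<Longrightarrow> FF k p \<ge> 9 * real k - 32" using p FF_high by auto
  ultimately have p34: "p < 3/4" using assms le by linarith
  have "(1-p)^2 \<ge> (1/4)^2" using p34 by (intro power_mono) auto
  then have "2 / (1-p)^2 \<le> 2 / (1/4)^2" using p34 by (intro divide_left_mono) auto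
  moreover have "2 * (p^k - 1) / (1-p)^2 \<ge> - 2 / (1-p)^2"
    using p by (intro divide_right_mono) auto
  moreover have "(2::real) / (1/4)^2 = 32" by (simp add: power2_eq_square)
  ultimately have "2 * (p^k - 1) / (1-p)^2 \<ge> - 32" by linarith
  then have "FF k p \<ge> real k * gg p - 32" using FF_g[OF p, of k] by simp
  then have "real k * (gg p - gg ss) \<le> 32" using le fs by (simp add: algebra_simps)
  moreover have "real k * (p - ss)^2 \<le> real k * (gg p - gg ss)"
    using gg_quad[OF p] by (intro mult_left_mono) auto
  ultimately have "real k * (p - ss)^2 \<le> 32" by linarith
  then have "(p - ss)^2 \<le> 32 / real k" using assms(2) by (simp add: field_simps)
  then have "sqrt ((p - ss)^2) \<le> sqrt (32 / real k)" by (rule real_sqrt_le_mono)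
  then show ?thesis by simp
qed

theorem corollary1:
  fixes B :: real
  assumes "B > 0"
  shows "(\<forall>\<^sub>F k in sequentially. \<exists>p. is_opt_p B k p) \<and>
         (\<forall>ps :: nat \<Rightarrow> real. (\<forall>\<^sub>F k in sequentially. is_opt_p B k (ps k))
              \<longrightarrow> ps \<longlonglongrightarrow> sqrt 2 - 1)"
proof (intro conjI allI impI)
  show "\<forall>\<^sub>F k in sequentially. \<exists>p. is_opt_p B k p"
    using eventually_ge_at_top[of "12::nat"] by (rule eventually_mono) (use exists_opt[OF assms] in auto)
next
  fix ps :: "nat \<Rightarrow> real"
  assume ev: "\<forall>\<^sub>F k in sequentially. is_opt_p B k (ps k)"
  have ev2: "\<forall>\<^sub>F k in sequentially. \<bar>ps k - ss\<bar> \<le> sqrt (32 / real k)"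
    using eventually_conj[OF ev eventually_ge_at_top[of "12::nat"]]
    by (rule eventually_mono) (use opt_close[OF assms] in auto)
  have lim: "(\<lambda>k. sqrt (32 / real k)) \<longlonglongrightarrow> 0"
    using tendsto_real_sqrt[OF lim_const_over_n[of "32::real"]] by simp
  have "ps \<longlonglongrightarrow> ss"
  proof (rule tendsto_sandwich)
    show "\<forall>\<^sub>F k in sequentially. ss - sqrt (32 / real k) \<le> ps k"
      using ev2 by (rule eventually_mono) auto
    show "\<forall>\<^sub>F k in sequentially. ps k \<le> ss + sqrt (32 / real k)"
      using ev2 by (rule eventually_mono) auto
    show "(\<lambda>k. ss - sqrt (32 / real k)) \<longlonglongrightarrow> ss"
      using tendsto_diff[OF tendsto_const lim, of ss] by simp
    show "(\<lambda>k. ss + sqrt (32 / real k)) \<longlonglongrightarrow> ss"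
      using tendsto_add[OF tendsto_const lim, of ss] by simp
  qed
  then show "ps \<longlonglongrightarrow> sqrt 2 - 1" unfolding ss_def .
qed

end
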